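(* Consider two ILP models for a problem whose solutions are hop-constrained trees, which have the same linear objective function $f(x)$ and the same additional linear constraints $C$, where both $f$ and $C$ involve only the $x$-variables, and which differ only in the hop-constrained tree constraints: the assignment model optimizes $f$ over integral $(x,y)\in\mathcal{A}$ with $x$ satisfying $C$, and the partial-ordering model optimizes $f$ over integral $(x,l,g)\in\mathcal{P}$ with $x$ satisfying $C$. Then the partial-ordering model is stronger than the assignment model: if the problem is a minimization problem, its LP relaxation value is at least that of the assignment model on every instance, and if it is a maximization problem, it is at most that of the assignment model on every instance.
   Context: Setting: $V$ is the node set of a complete undirected graph, $r\in V$ a root, $H\ge1$ a hop limit. A hop-constrained tree is a tree rooted at $r$ in which every node has at most $H$ edges on its path to $r$. For every ordered pair $(u,v)$ of distinct nodes there is a real variable $x_{u,v}$. Common constraints: (X1) $\sum_{u\neq v}x_{u,v}\le1$ for all $v\in V$; (X2) $\sum_{u\in V\setminus\{v,w\}}x_{u,v}\ge x_{v,w}$ for all $v\in V\setminus\{r\}$, $w\neq v$; (X3) $0\le x_{u,v}\le1$. $\mathcal{P}$: all $(x,l,g)$ (with $l_{v,i},g_{i,v}$ for $v\in V$, $i=0,\dots,H$) satisfying (X1)–(X3) and $l_{r,0}=g_{0,r}=0$; $l_{v,1}=g_{H,v}=0$ for $v\neq r$; $l_{v,i}\le l_{v,i+1}$ and $g_{i,v}+l_{v,i+1}=1$ for $v\in V$, $i=0,\dots,H-1$; $l_{u,i}+g_{i,v}\ge x_{u,v}$ for $u\neq v$, $i=0,\dots,H$; $0\le l,g\le1$. $\mathcal{A}$: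 all $(x,y)$ (with $y_{v,i}$ for $v\in V$, $i=0,\dots,H$) satisfying (X1)–(X3) and $y_{r,0}=1$; $y_{r,i}=0$ for $i\ge1$; $y_{v,0}=0$ and $\sum_{i=1}^Hy_{v,i}=1$ for $v\neq r$; $y_{u,i}-y_{v,i+1}+x_{u,v}\le1$ for $u\neq v$, $i=0,\dots,H-1$; $y_{u,H}+x_{u,v}\le1$ for $u\neq v$; $0\le y\le1$. The LP relaxation value of an ILP is the optimum of the same objective over the corresponding polytope (integrality dropped). *)

theory Defs
  imports "HOL-Analysis.Analysis"
begin

text \<open>Variables: x u v for ordered pairs of distinct nodes of V; l v i, g i v, y v i for
 v in V and i in 0..H.  Values outside these index ranges are unconstrained and irrelevant.\<close>

definition x_cons :: "'a set \<Rightarrow> 'a \<Rightarrow> ('a \<Rightarrow> 'a \<Rightarrow> real) \<Rightarrow> bool" where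
  "x_cons V r x \<longleftrightarrow>
     (\<forall>v\<in>V. (\<Sum>u\<in>V - {v}. x u v) \<le> 1) \<and>
     (\<forall>v\<in>V - {r}. \<forall>w\<in>V - {v}. (\<Sum>u\<in>V - {v, w}. x u v) \<ge> x v w) \<and>
     (\<forall>u\<in>V. \<forall>v\<in>V. u \<noteq> v \<longrightarrow> 0 \<le> x u v \<and> x u v \<le> 1)"

definition poly_P :: "'a set \<Rightarrow> 'a \<Rightarrow> nat \<Rightarrow>
    (('a \<Rightarrow> 'a \<Rightarrow> real) \<times> ('a \<Rightarrow> nat \<Rightarrow> real) \<times> (nat \<Rightarrow> 'a \<Rightarrow> real)) set" where
  "poly_P V r H = {(x, l, g). x_cons V r x \<and>
     l r 0 = 0 \<and> g 0 r = 0 \<and>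
     (\<forall>v\<in>V - {r}. l v 1 = 0 \<and> g H v = 0) \<and>
     (\<forall>v\<in>V. \<forall>i<H. l v i \<le> l v (i + 1) \<and> g i v + l v (i + 1) = 1) \<and>
     (\<forall>u\<in>V. \<forall>v\<in>V. u \<noteq> v \<longrightarrow> (\<forall>i\<le>H. l u i + g i v \<ge> x u v)) \<and>
     (\<forall>v\<in>V. \<forall>i\<le>H. 0 \<le> l v i \<and> l v i \<le> 1 \<and> 0 \<le> g i v \<and> g i v \<le> 1)}"

definition poly_A :: "'a set \<Rightarrow> 'a \<Rightarrow> nat \<Rightarrow>
    (('a \<Rightarrow> 'a \<Rightarrow> real) \<times> ('a \<Rightarrow> nat \<Rightarrow> real)) set" where
  "poly_A V r H = {(x, y). x_cons V r x \<and>
     y r 0 = 1 \<and> (\<forall>i\<in>{1..H}. y r i = 0) \<and>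
     (\<forall>v\<in>V - {r}. y v 0 = 0 \<and> (\<Sum>i=1..H. y v i) = 1) \<and>
     (\<forall>u\<in>V. \<forall>v\<in>V. u \<noteq> v \<longrightarrow>
        (\<forall>i<H. y u i - y v (i + 1) + x u v \<le> 1) \<and> y u H + x u v \<le> 1) \<and>
     (\<forall>v\<in>V. \<forall>i\<le>H. 0 \<le> y v i \<and> y v i \<le> 1)}"

definition lin_x :: "'a set \<Rightarrow> ('a \<Rightarrow> 'a \<Rightarrow> real) \<Rightarrow> ('a \<Rightarrow> 'a \<Rightarrow> real) \<Rightarrow> real" where
  "lin_x V c x = (\<Sum>(u, v) \<in> {(u, v). u \<in> V \<and> v \<in> V \<and> u \<noteq> v}. c u v * x u v)"

text \<open>Additional linear constraints C: a set of pairs (a, b) each meaning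
  lin_x V a x \<le> b (equalities / \<ge>-constraints are expressed by such pairs).\<close>
definition sat_C :: "'a set \<Rightarrow> (('a \<Rightarrow> 'a \<Rightarrow> real) \<times> real) set \<Rightarrow> ('a \<Rightarrow> 'a \<Rightarrow> real) \<Rightarrow> bool" where
  "sat_C V C x \<longleftrightarrow> (\<forall>(a, b)\<in>C. lin_x V a x \<le> b)"

text \<open>LP relaxation values (in extended reals: infeasible min = +\<infinity>, infeasible max = -\<infinity>).\<close>
definition lp_min_P where
  "lp_min_P V r H c C = (INF p \<in> {p \<in> poly_P V r H. sat_C V C (fst p)}. ereal (lin_x V c (fst p)))"
definition lp_max_P where
  "lp_max_P V r H c C = (SUP p \<in> {p \<in> poly_P V r H. sat_C V C (fst p)}. ereal (lin_x V c (fst p)))"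
definition lp_min_A where
  "lp_min_A V r H c C = (INF p \<in> {p \<in> poly_A V r H. sat_C V C (fst p)}. ereal (lin_x V c (fst p)))"
definition lp_max_A where
  "lp_max_A V r H c C = (SUP p \<in> {p \<in> poly_A V r H. sat_C V C (fst p)}. ereal (lin_x V c (fst p)))"

end

theory Submission
  imports Defs
begin


lemma lip_cont:
  fixes h :: "('a \<Rightarrow> real) \<Rightarrow> real" and N :: "'a set"
  assumes fin: "finite N" and C: "C \<ge> 0"
    and lip: "\<And>z w. z \<in> K \<Longrightarrow> w \<in> K \<Longrightarrow> \<bar>h z - h w\<bar> \<le> C * (\<Sum>j\<in>N. \<bar>z j - w j\<bar>)"
  shows "continuous_on K h"
  unfolding continuous_on_topological
proof (intro ballI allI impI)
  fix x B assume x: "x \<in> K" and B: "open B" "h x \<in> B"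
  obtain e where e: "e > 0" "ball (h x) e \<subseteq> B" using B openE by blast
  define \<eta> where "\<eta> = e / ((C + 1) * (real (card N) + 1))"
  have eta: "\<eta> > 0" using e C by (simp add: \<eta>_def)
  define A where "A = {y. \<forall>j\<in>N. y ((\<lambda>i. i) j) \<in> ball (x j) \<eta>}"
  have "open A" unfolding A_def by (rule product_topology_basis') (auto simp: fin)
  moreover have "x \<in> A" using eta by (simp add: A_def)
  moreover have "h y \<in> B" if y: "y \<in> K" "y \<in> A" for y
  proof -
    have "(\<Sum>j\<in>N. \<bar>y j - x j\<bar>) \<le> (\<Sum>j\<in>N. \<eta>)"
      by (rule sum_mono) (use y(2) in \<open>auto simp: A_def dist_real_def abs_minus_commute less_imp_le\<close>)
    also have "\<dots> = real (card N) * \<eta>" by simp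
    finally have D: "(\<Sum>j\<in>N. \<bar>y j - x j\<bar>) \<le> real (card N) * \<eta>" .
    have "\<bar>h y - h x\<bar> \<le> C * (\<Sum>j\<in>N. \<bar>y j - x j\<bar>)" using lip y(1) x by blast
    also have "\<dots> \<le> C * (real (card N) * \<eta>)" using D C by (simp add: mult_left_mono)
    also have "\<dots> < e"
    proof -
      have "C * (real (card N) * \<eta>) = e * (C * real (card N)) / ((C + 1) * (real (card N) + 1))"
        by (simp add: \<eta>_def)
      also have "\<dots> < e"
      proof -
        have "C * real (card N) < (C + 1) * (real (card N) + 1)" using C
          by (simp add: algebra_simps)
        then show ?thesis using e C by (simp add: divide_less_eq mult_strict_left_mono)
      qed
      finally show ?thesis .
    qed
    finally show ?thesis using e by (auto simp: dist_real_def abs_minus_commute)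
  qed
  ultimately show "\<exists>A. open A \<and> x \<in> A \<and> (\<forall>y\<in>K. y \<in> A \<longrightarrow> h y \<in> B)" by blast
qed

lemma brouwer_fin:
  fixes f :: "('a \<Rightarrow> real) \<Rightarrow> 'a \<Rightarrow> real" and N :: "'a set" and L :: real
  assumes fin: "finite N"
    and into: "\<And>z. (\<forall>i\<in>N. 0 \<le> z i \<and> z i \<le> 1) \<Longrightarrow> (\<forall>i\<in>N. 0 \<le> f z i \<and> f z i \<le> 1)"
    and lip0: "\<And>z w i. (\<forall>i\<in>N. 0 \<le> z i \<and> z i \<le> 1) \<Longrightarrow> (\<forall>i\<in>N. 0 \<le> w i \<and> w i \<le> 1) \<Longrightarrow>
        i \<in> N \<Longrightarrow> \<bar>f z i - f w i\<bar> \<le> L * (\<Sum>j\<in>N. \<bar>z j - w j\<bar>)"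
  shows "\<exists>z. (\<forall>i\<in>N. 0 \<le> z i \<and> z i \<le> 1) \<and> (\<forall>i\<in>N. f z i = z i)"
proof (cases "N = {}")
  case True then show ?thesis by auto
next
  case Nne: False
  define L' where "L' = \<bar>L\<bar> + 1"
  have L': "L' > 0" by (simp add: L'_def)
  define cube where "cube z \<longleftrightarrow> (\<forall>i\<in>N. 0 \<le> z i \<and> z i \<le> 1)" for z :: "'a \<Rightarrow> real"
  define D where "D z w = (\<Sum>j\<in>N. \<bar>z j - w j\<bar>)" for z w :: "'a \<Rightarrow> real"
  have Dnn: "D z w \<ge> 0" for z w by (simp add: D_def sum_nonneg)
  have lip: "\<bar>f z i - f w i\<bar> \<le> L' * D z w" if "cube z" "cube w" "i \<in> N" for z w i
  proof -
    have "\<bar>f z i - f w i\<bar> \<le> L * D z w" using lip0 that by (simp add: cube_def D_def)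
    also have "\<dots> \<le> L' * D z w" using Dnn[of z w] by (simp add: L'_def mult_right_mono)
    finally show ?thesis .
  qed
  define S where "S i = (if i \<in> N then {0..1} else {0::real})" for i
  define K where "K = PiE UNIV S"
  have K_iff: "z \<in> K \<longleftrightarrow> cube z \<and> (\<forall>i. i \<notin> N \<longrightarrow> z i = 0)" for z
    by (auto simp: K_def S_def cube_def PiE_iff split: if_splits)
  have "compactin (product_topology (\<lambda>i. euclidean) UNIV) K"
    unfolding K_def by (subst compactin_PiE) (auto simp: S_def)
  then have cK: "compact K" by (simp add: euclidean_product_topology)
  have Kne: "K \<noteq> {}" using K_iff[of "\<lambda>_. 0"] by (auto simp: cube_def)
  define g where "g z = (\<Sum>i\<in>N. \<bar>f z i - z i\<bar>)" for z
  have glip: "\<bar>g z - g w\<bar> \<le> (real (card N) * L' + 1) * D z w" if "z \<in> K" "w \<in> K" for z w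
  proof -
    have "\<bar>g z - g w\<bar> \<le> (\<Sum>i\<in>N. \<bar>\<bar>f z i - z i\<bar> - \<bar>f w i - w i\<bar>\<bar>)"
      unfolding g_def sum_subtractf[symmetric] by (rule sum_abs)
    also have "\<dots> \<le> (\<Sum>i\<in>N. L' * D z w + \<bar>z i - w i\<bar>)"
    proof (rule sum_mono)
      fix i assume i: "i \<in> N"
      have "\<bar>f z i - f w i\<bar> \<le> L' * D z w" using lip that K_iff i by blast
      then show "\<bar>\<bar>f z i - z i\<bar> - \<bar>f w i - w i\<bar>\<bar> \<le> L' * D z w + \<bar>z i - w i\<bar>" by linarith
    qed
    also have "\<dots> = (real (card N) * L' + 1) * D z w"
      by (simp add: sum.distrib D_def algebra_simps)
    finally show ?thesis .
  qed
  have gcont: "continuous_on K g"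
    by (rule lip_cont[OF fin _ glip[unfolded D_def]]) (use L' in auto)
  obtain z0 where z0: "z0 \<in> K" "\<And>y. y \<in> K \<Longrightarrow> g z0 \<le> g y"
    using continuous_attains_inf[OF cK Kne gcont] by blast
  have gnn: "g z \<ge> 0" for z by (simp add: g_def sum_nonneg)
  show ?thesis
  proof (cases "g z0 = 0")
    case True
    then have "\<forall>i\<in>N. \<bar>f z0 i - z0 i\<bar> = 0"
      using sum_nonneg_eq_0_iff[OF fin, of "\<lambda>i. \<bar>f z0 i - z0 i\<bar>"] by (simp add: g_def)
    then show ?thesis using z0(1) K_iff by (auto simp: cube_def)
  next
    case False
    define d where "d = g z0"
    have d: "d > 0" using False gnn[of z0] by (simp add: d_def)
    have gd: "\<And>y. y \<in> K \<Longrightarrow> d \<le> g y" using z0 by (simp add: d_def)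
    define n where "n = card N"
    have n: "n > 0" using Nne fin by (simp add: n_def card_gt_0_iff)
    obtain b where b: "bij_betw b {0..<n} N" using ex_bij_betw_nat_finite[OF fin] n_def by blast
    define b' where "b' = inv_into {0..<n} b"
    have b'N: "b' i < n" if "i \<in> N" for i
      using b that by (metis atLeastLessThan_iff b'_def bij_betw_def inv_into_into)
    have bb': "b (b' i) = i" if "i \<in> N" for i
      using b that by (simp add: b'_def bij_betw_def f_inv_into_f)
    have b'b: "b' (b k) = k" if "k < n" for k
      using b that by (simp add: b'_def bij_betw_def inv_into_f_f)
    have bN: "b k \<in> N" if "k < n" for k using b that by (auto simp: bij_betw_def)
    define M where "M = real n * (3 * L' + 3) * real n / d"
    obtain p :: nat where p: "M + 1 \<le> real p" using real_arch_simple by blast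
    have M0: "M \<ge> 0" using d L' by (simp add: M_def)
    have p0: "p > 0" using p M0 by auto
    define pt where "pt q = (\<lambda>i. if i \<in> N then real (q (b' i)) / real p else 0)" for q :: "nat \<Rightarrow> nat"
    have ptK: "pt q \<in> K" if "\<forall>k<n. q k \<le> p" for q
      unfolding K_iff cube_def pt_def using that b'N p0 by auto
    define label where "label y i = (if y i \<le> f y i \<and> y i \<noteq> 1 then 0 else (1::nat))" for y i
    define lab where "lab q k = label (pt q) (b k)" for q k
    have q1: "\<forall>x. (\<forall>i<n. x i \<le> p) \<longrightarrow> (\<forall>i<n. lab x i = (0::nat) \<or> lab x i = 1)"
      by (simp add: lab_def label_def)
    have q2: "\<forall>x. (\<forall>i<n. x i \<le> p) \<longrightarrow> (\<forall>i<n. x i = 0 \<longrightarrow> lab x i = 0)"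
    proof (intro allI impI)
      fix x i assume x: "\<forall>i<n. x i \<le> p" and i: "i < n" "x i = 0"
      have "cube (pt x)" using ptK[OF x] K_iff by blast
      then have "0 \<le> f (pt x) (b i)" using into bN[OF i(1)] by (auto simp: cube_def)
      moreover have "pt x (b i) = 0" using i bN b'b by (simp add: pt_def)
      ultimately show "lab x i = 0" by (simp add: lab_def label_def)
    qed
    have q3: "\<forall>x. (\<forall>i<n. x i \<le> p) \<longrightarrow> (\<forall>i<n. x i = p \<longrightarrow> lab x i = 1)"
    proof (intro allI impI)
      fix x i assume x: "\<forall>i<n. x i \<le> p" and i: "i < n" "x i = p"
      have "pt x (b i) = 1" using i bN b'b p0 by (simp add: pt_def)
      then show "lab x i = 1" by (simp add: lab_def label_def)
    qed
    obtain q where q: "\<forall>i<n. q i < p"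
      and qrs: "\<forall>i<n. \<exists>r s. (\<forall>j<n. q j \<le> r j \<and> r j \<le> q j + 1) \<and> (\<forall>j<n. q j \<le> s j \<and> s j \<le> q j + 1) \<and> lab r i \<noteq> lab s i"
      using kuhn_lemma[OF p0 q1 q2 q3] by blast
    define z where "z = pt q"
    have zK: "z \<in> K" unfolding z_def by (rule ptK) (use q in \<open>auto simp: less_imp_le\<close>)
    have close: "D (pt r) z \<le> real n / real p" if "\<forall>j<n. q j \<le> r j \<and> r j \<le> q j + 1" for r
    proof -
      have "D (pt r) z \<le> (\<Sum>i\<in>N. 1 / real p)"
        unfolding D_def z_def
      proof (rule sum_mono)
        fix i assume i: "i \<in> N"
        have "q (b' i) \<le> r (b' i)" "r (b' i) \<le> q (b' i) + 1" using that b'N[OF i] by auto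
        then have "\<bar>real (r (b' i)) - real (q (b' i))\<bar> \<le> 1" by linarith
        then show "\<bar>pt r i - pt q i\<bar> \<le> 1 / real p" using i p0
        proof -
          have "pt r i - pt q i = (real (r (b' i)) - real (q (b' i))) / real p"
            using i by (simp add: pt_def diff_divide_distrib)
          then have "\<bar>pt r i - pt q i\<bar> = \<bar>real (r (b' i)) - real (q (b' i))\<bar> / real p"
            by simp
          also have "\<dots> \<le> 1 / real p"
            by (rule divide_right_mono) (use \<open>\<bar>real (r (b' i)) - real (q (b' i))\<bar> \<le> 1\<close> in auto)
          finally show ?thesis .
        qed
      qed
      then show ?thesis by (simp add: n_def)
    qed
    have rK: "pt r \<in> K" if "\<forall>j<n. q j \<le> r j \<and> r j \<le> q j + 1" for r
    proof (rule ptK, intro allI impI)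
      fix k assume "k < n"
      then have "r k \<le> q k + 1" "q k < p" using that q by auto
      then show "r k \<le> p" by linarith
    qed
    have each: "\<bar>f z i - z i\<bar> \<le> (3 * L' + 3) * real n / real p" if i: "i \<in> N" for i
    proof -
      obtain r s where r: "\<forall>j<n. q j \<le> r j \<and> r j \<le> q j + 1" and s: "\<forall>j<n. q j \<le> s j \<and> s j \<le> q j + 1"
        and ne: "lab r (b' i) \<noteq> lab s (b' i)"
        using qrs b'N[OF i] by blast
      define x where "x = pt r"
      define y where "y = pt s"
      have xK: "x \<in> K" and yK: "y \<in> K" using rK[OF r] rK[OF s] by (simp_all add: x_def y_def)
      have ne': "label x i \<noteq> label y i" using ne by (simp add: lab_def bb'[OF i] x_def y_def)
      have cx: "0 \<le> f x i \<and> f x i \<le> 1" "0 \<le> x i \<and> x i \<le> 1"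
        using into[of x] xK K_iff i by (auto simp: cube_def)
      have cy: "0 \<le> f y i \<and> f y i \<le> 1" "0 \<le> y i \<and> y i \<le> 1"
        using into[of y] yK K_iff i by (auto simp: cube_def)
      have lem1: "\<bar>f x i - x i\<bar> \<le> \<bar>f y i - f x i\<bar> + \<bar>y i - x i\<bar>"
      proof -
        have "(x i \<le> f x i \<and> x i \<noteq> 1) \<noteq> (y i \<le> f y i \<and> y i \<noteq> 1)"
        proof
          assume eq: "(x i \<le> f x i \<and> x i \<noteq> 1) = (y i \<le> f y i \<and> y i \<noteq> 1)"
          have "label x i = label y i" unfolding label_def by (simp only: eq)
          with ne' show False by simp
        qed
        then consider "x i \<le> f x i" "f y i \<le> y i" | "f x i \<le> x i" "y i \<le> f y i"
          using cx cy by fastforce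
        then show ?thesis by cases (simp_all add: abs_if)
      qed
      have Dxz: "D x z \<le> real n / real p" using close[OF r] by (simp add: x_def)
      have Dyz: "D y z \<le> real n / real p" using close[OF s] by (simp add: y_def)
      have Dsym: "D a c = D c a" for a c by (simp add: D_def abs_minus_commute)
      have Dtri: "D a c \<le> D a e + D e c" for a c e
        unfolding D_def sum.distrib[symmetric] by (rule sum_mono) linarith
      have coord: "\<bar>a i - c i\<bar> \<le> D a c" for a c
        unfolding D_def using i fin by (intro member_le_sum) auto
      have "\<bar>f z i - z i\<bar> \<le> \<bar>f z i - f x i\<bar> + \<bar>f x i - x i\<bar> + \<bar>x i - z i\<bar>" by linarith
      also have "\<dots> \<le> L' * D z x + (L' * D y x + D y x) + D x z"
      proof -
        have cz: "cube z" "cube x" "cube y" using zK xK yK K_iff by blast+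
        have "\<bar>f z i - f x i\<bar> \<le> L' * D z x" using lip[OF cz(1) cz(2) i] .
        moreover have "\<bar>f y i - f x i\<bar> \<le> L' * D y x" using lip[OF cz(3) cz(2) i] .
        moreover have "\<bar>y i - x i\<bar> \<le> D y x" by (rule coord)
        moreover have "\<bar>x i - z i\<bar> \<le> D x z" by (rule coord)
        ultimately show ?thesis using lem1 by linarith
      qed
      also have "\<dots> \<le> L' * (real n / real p) + (L' * (2 * (real n / real p)) + 2 * (real n / real p)) + real n / real p"
      proof -
        have Dzx: "D z x \<le> real n / real p" using Dxz Dsym[of z x] by linarith
        have Dyx: "D y x \<le> 2 * (real n / real p)" using Dtri[of y x z] Dyz Dzx by linarith
        have 1: "L' * D z x \<le> L' * (real n / real p)" by (rule mult_left_mono[OF Dzx]) (use L' in auto)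
        have 2: "L' * D y x \<le> L' * (2 * (real n / real p))" by (rule mult_left_mono[OF Dyx]) (use L' in auto)
        show ?thesis using 1 2 Dyx Dxz by linarith
      qed
      also have "\<dots> = (3 * L' + 3) * real n / real p" by (simp add: algebra_simps add_divide_distrib)
      finally show ?thesis .
    qed
    have "g z \<le> (\<Sum>i\<in>N. (3 * L' + 3) * real n / real p)"
      unfolding g_def by (rule sum_mono) (rule each)
    also have "\<dots> = real n * ((3 * L' + 3) * real n) / real p" by (simp add: n_def)
    also have "\<dots> < d"
    proof -
      have "real n * ((3 * L' + 3) * real n) = M * d" using d by (simp add: M_def)
      moreover have "M * d < real p * d" using p d by simp
      ultimately show ?thesis using p0 by (simp add: divide_less_eq mult.commute)
    qed
    finally show ?thesis using gd[OF zK] by simp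
  qed
qed



definition rq :: "'a set \<Rightarrow> ('a \<Rightarrow> 'a \<Rightarrow> real) \<Rightarrow> ('a \<Rightarrow> real) \<Rightarrow> 'a \<Rightarrow> real" where
  "rq N x Y v = Max (insert 0 ((\<lambda>u. Y u - (1 - x u v)) ` (N - {v})))"

primrec st :: "'a set \<Rightarrow> ('a \<Rightarrow> 'a \<Rightarrow> real) \<Rightarrow> ('a \<Rightarrow> real) \<Rightarrow> nat \<Rightarrow> ('a \<Rightarrow> real) \<times> ('a \<Rightarrow> real)" where
  "st N x z 0 = (z, \<lambda>v. 0)"
| "st N x z (Suc k) =
    ((\<lambda>v. min 1 (snd (st N x z k) v + rq N x (fst (st N x z k)) v) - snd (st N x z k) v),
     (\<lambda>v. min 1 (snd (st N x z k) v + rq N x (fst (st N x z k)) v)))"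

lemma rq_nn: "finite N \<Longrightarrow> 0 \<le> rq N x Y v"
  unfolding rq_def by (rule Max_ge) auto

lemma rq_ge: "finite N \<Longrightarrow> u \<in> N \<Longrightarrow> u \<noteq> v \<Longrightarrow> Y u - (1 - x u v) \<le> rq N x Y v"
  unfolding rq_def by (rule Max_ge) auto

lemma rq_le: "finite N \<Longrightarrow> 0 \<le> c \<Longrightarrow> (\<And>u. u \<in> N \<Longrightarrow> u \<noteq> v \<Longrightarrow> Y u - (1 - x u v) \<le> c) \<Longrightarrow> rq N x Y v \<le> c"
  unfolding rq_def by (subst Max_le_iff) auto

lemma rq_le_sum:
  assumes "finite N"
  shows "rq N x Y v \<le> (\<Sum>u\<in>N - {v}. max 0 (Y u - (1 - x u v)))"
proof (rule rq_le[OF assms])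
  show "0 \<le> (\<Sum>u\<in>N - {v}. max 0 (Y u - (1 - x u v)))" by (rule sum_nonneg) auto
  fix u assume "u \<in> N" "u \<noteq> v"
  then have "max 0 (Y u - (1 - x u v)) \<le> (\<Sum>u\<in>N - {v}. max 0 (Y u - (1 - x u v)))"
    using assms by (intro member_le_sum) auto
  then show "Y u - (1 - x u v) \<le> (\<Sum>u\<in>N - {v}. max 0 (Y u - (1 - x u v)))" by linarith
qed

lemma rq_lip:
  assumes "finite N" "0 \<le> e" "\<And>u. u \<in> N \<Longrightarrow> \<bar>Y u - Y' u\<bar> \<le> e"
  shows "\<bar>rq N x Y v - rq N x Y' v\<bar> \<le> e"
proof -
  have 1: "rq N x Y v \<le> rq N x Y' v + e"
    by (rule rq_le[OF assms(1)]) (use assms rq_nn[OF assms(1), of x Y' v] rq_ge[OF assms(1), of _ v Y' x] in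
        \<open>force+\<close>)
  have 2: "rq N x Y' v \<le> rq N x Y v + e"
    by (rule rq_le[OF assms(1)]) (use assms rq_nn[OF assms(1), of x Y v] rq_ge[OF assms(1), of _ v Y x] in
        \<open>force+\<close>)
  show ?thesis using 1 2 by linarith
qed

lemma st_bounds:
  assumes "finite N"
  shows "0 \<le> snd (st N x z k) v \<and> snd (st N x z k) v \<le> 1"
  by (induction k) (use rq_nn[OF assms] in \<open>auto simp: min_def\<close>)

lemma st_mono:
  assumes "finite N"
  shows "snd (st N x z k) v \<le> snd (st N x z (Suc k)) v"
  using st_bounds[OF assms, of x z k v] rq_nn[OF assms, of x "fst (st N x z k)" v] by (simp add: min_def)

lemma st_Y_nn:
  assumes "finite N"
  shows "0 \<le> fst (st N x z (Suc k)) v"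
  using st_mono[OF assms, of x z k v] by simp

lemma st_Y_le:
  assumes "finite N"
  shows "fst (st N x z (Suc k)) v \<le> rq N x (fst (st N x z k)) v"
  by (simp add: min_def)

lemma st_sum: "(\<Sum>k<Suc m. fst (st N x z k) v) = z v + snd (st N x z m) v"
  by (induction m) simp_all

lemma min1_lip: "\<bar>min 1 (a::real) - min 1 b\<bar> \<le> \<bar>a - b\<bar>"
  by (simp add: min_def abs_if)

lemma st_lip:
  assumes fin: "finite N" and d: "0 \<le> \<delta>" and zw: "\<And>u. u \<in> N \<Longrightarrow> \<bar>z u - w u\<bar> \<le> \<delta>"
  shows "\<forall>v\<in>N. \<bar>fst (st N x z k) v - fst (st N x w k) v\<bar> \<le> 3 ^ k * \<delta> \<and>
                \<bar>snd (st N x z k) v - snd (st N x w k) v\<bar> \<le> 3 ^ k * \<delta>"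
proof (induction k)
  case 0
  then show ?case using zw d by simp
next
  case (Suc k)
  show ?case
  proof
    fix v assume v: "v \<in> N"
    let ?Tz = "snd (st N x z k) v" and ?Tw = "snd (st N x w k) v"
    let ?rz = "rq N x (fst (st N x z k)) v" and ?rw = "rq N x (fst (st N x w k)) v"
    have r: "\<bar>?rz - ?rw\<bar> \<le> 3 ^ k * \<delta>"
      by (rule rq_lip[OF fin]) (use Suc.IH d in auto)
    have T: "\<bar>?Tz - ?Tw\<bar> \<le> 3 ^ k * \<delta>" using Suc.IH v by blast
    have T': "\<bar>min 1 (?Tz + ?rz) - min 1 (?Tw + ?rw)\<bar> \<le> 2 * 3 ^ k * \<delta>"
      using min1_lip[of "?Tz + ?rz" "?Tw + ?rw"] r T by linarith
    have p: "0 \<le> 3 ^ k * \<delta>" using d by simp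
    show "\<bar>fst (st N x z (Suc k)) v - fst (st N x w (Suc k)) v\<bar> \<le> 3 ^ Suc k * \<delta> \<and>
          \<bar>snd (st N x z (Suc k)) v - snd (st N x w (Suc k)) v\<bar> \<le> 3 ^ Suc k * \<delta>"
      using T T' p by simp
  qed
qed

lemma sum_pos_part_le:
  fixes a :: "nat \<Rightarrow> real"
  assumes fin: "finite I" and nn: "\<And>k. k \<in> I \<Longrightarrow> 0 \<le> a k" and s1: "(\<Sum>k\<in>I. a k) \<le> 1"
    and s: "0 \<le> s" "s \<le> 1"
  shows "(\<Sum>k\<in>I. max 0 (a k - s)) \<le> 1 - s"
proof -
  define J where "J = {k\<in>I. s < a k}"
  have J: "J \<subseteq> I" "finite J" using fin by (auto simp: J_def)
  have "(\<Sum>k\<in>I. max 0 (a k - s)) = (\<Sum>k\<in>J. max 0 (a k - s))"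
    by (rule sum.mono_neutral_right[OF fin J(1)]) (auto simp: J_def)
  also have "\<dots> = (\<Sum>k\<in>J. a k - s)"
    by (rule sum.cong) (auto simp: J_def)
  also have "\<dots> \<le> 1 - s"
  proof (cases "J = {}")
    case True then show ?thesis using s by simp
  next
    case False
    then have c: "1 \<le> card J" using J(2) by (simp add: Suc_le_eq card_gt_0_iff)
    have "(\<Sum>k\<in>J. a k - s) = (\<Sum>k\<in>J. a k) - real (card J) * s"
      by (simp add: sum_subtractf)
    also have "\<dots> \<le> (\<Sum>k\<in>I. a k) - s"
    proof -
      have "(\<Sum>k\<in>J. a k) \<le> (\<Sum>k\<in>I. a k)" by (rule sum_mono2[OF fin J(1)]) (use nn in auto)
      moreover have "s \<le> real (card J) * s" using c s by (simp add: mult_le_cancel_right1)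
      ultimately show ?thesis by linarith
    qed
    finally show ?thesis using s1 by linarith
  qed
  finally show ?thesis .
qed

lemma sum_1_shift: "(\<Sum>i = 1..n. f i) = (\<Sum>k<n. f (Suc k))"
  by (induction n) (simp_all add: atLeastAtMostSuc_conv add.commute)


lemma P_to_A:
  assumes finV: "finite V" and rV: "r \<in> V" and H1: "1 \<le> H"
    and P: "(x, l, g) \<in> poly_P V r H"
  shows "\<exists>y. (x, y) \<in> poly_A V r H"
proof -
  define N where "N = V - {r}"
  have finN: "finite N" using finV by (simp add: N_def)
  from P have xc: "x_cons V r x"
    and g0r: "g 0 r = 0"
    and Pl1: "\<And>v. v \<in> N \<Longrightarrow> l v 1 = 0 \<and> g H v = 0"
    and Pmono: "\<And>v i. v \<in> V \<Longrightarrow> i < H \<Longrightarrow> l v i \<le> l v (i + 1) \<and> g i v + l v (i + 1) = 1"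
    and Pcov: "\<And>u v i. u \<in> V \<Longrightarrow> v \<in> V \<Longrightarrow> u \<noteq> v \<Longrightarrow> i \<le> H \<Longrightarrow> l u i + g i v \<ge> x u v"
    and Pb: "\<And>v i. v \<in> V \<Longrightarrow> i \<le> H \<Longrightarrow> 0 \<le> l v i \<and> l v i \<le> 1"
    unfolding poly_P_def N_def by auto
  from xc have X1: "\<And>v. v \<in> V \<Longrightarrow> (\<Sum>u\<in>V - {v}. x u v) \<le> 1"
    and Xb: "\<And>u v. u \<in> V \<Longrightarrow> v \<in> V \<Longrightarrow> u \<noteq> v \<Longrightarrow> 0 \<le> x u v \<and> x u v \<le> 1"
    unfolding x_cons_def by auto
  have NV: "\<And>v. v \<in> N \<Longrightarrow> v \<in> V" "\<And>v. v \<in> N \<Longrightarrow> v \<noteq> r" by (auto simp: N_def)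
  have xr0: "x u r = 0" if u: "u \<in> N" for u
  proof -
    have "l u 0 + g 0 r \<ge> x u r" using Pcov[of u r 0] u rV NV by auto
    moreover have "l u 0 \<le> l u 1" using Pmono[of u 0] H1 NV u by auto
    moreover have "0 \<le> x u r" using Xb[of u r] NV u rV by auto
    ultimately show ?thesis using Pl1[OF u] g0r by linarith
  qed
  have key: "1 - l u (k + 1) - (1 - x u v) \<le> 1 - l v (k + 2)"
    if "u \<in> N" "v \<in> N" "u \<noteq> v" "k + 1 < H" for u v k
  proof -
    have "l u (k + 1) + g (k + 1) v \<ge> x u v" using Pcov[of u v "k + 1"] that NV by auto
    moreover have "g (k + 1) v + l v (k + 2) = 1" using Pmono[of v "k + 1"] that NV by auto
    ultimately show ?thesis by linarith
  qed
  have keyH: "x u v \<le> l u H" if "u \<in> N" "v \<in> N" "u \<noteq> v" for u v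
    using Pcov[of u v H] Pl1[of v] that NV by auto
  have X1': "x r v + (\<Sum>u\<in>N - {v}. x u v) \<le> 1" if v: "v \<in> N" for v
  proof -
    have "V - {v} = insert r (N - {v})" using v rV by (auto simp: N_def)
    then have "(\<Sum>u\<in>V - {v}. x u v) = x r v + (\<Sum>u\<in>N - {v}. x u v)"
      using finN by (simp add: N_def)
    then show ?thesis using X1[of v] v NV by simp
  qed
  define cube where "cube z \<longleftrightarrow> (\<forall>i\<in>N. 0 \<le> z i \<and> z i \<le> 1)" for z :: "'a \<Rightarrow> real"
  define \<Phi> where "\<Phi> z v = 1 - snd (st N x z (H - 1)) v" for z v
  have into: "\<forall>i\<in>N. 0 \<le> \<Phi> z i \<and> \<Phi> z i \<le> 1" for z
    using st_bounds[OF finN] by (simp add: \<Phi>_def)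
  have lip: "\<bar>\<Phi> z i - \<Phi> w i\<bar> \<le> 3 ^ (H - 1) * (\<Sum>j\<in>N. \<bar>z j - w j\<bar>)" if "i \<in> N" for z w i
  proof -
    have "\<bar>z u - w u\<bar> \<le> (\<Sum>j\<in>N. \<bar>z j - w j\<bar>)" if "u \<in> N" for u
      using that finN by (intro member_le_sum) auto
    then have "\<forall>v\<in>N. \<bar>fst (st N x z (H - 1)) v - fst (st N x w (H - 1)) v\<bar> \<le> 3 ^ (H - 1) * (\<Sum>j\<in>N. \<bar>z j - w j\<bar>) \<and>
                \<bar>snd (st N x z (H - 1)) v - snd (st N x w (H - 1)) v\<bar> \<le> 3 ^ (H - 1) * (\<Sum>j\<in>N. \<bar>z j - w j\<bar>)"
      by (intro st_lip[OF finN]) (auto intro: sum_nonneg)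
    then show ?thesis using that by (simp add: \<Phi>_def abs_minus_commute)
  qed
  obtain z where zc: "\<forall>i\<in>N. 0 \<le> z i \<and> z i \<le> 1" and zfix: "\<forall>i\<in>N. \<Phi> z i = z i"
    using brouwer_fin[OF finN, of \<Phi> "3 ^ (H - 1)"] into lip by blast
  define Y where "Y k = fst (st N x z k)" for k
  define T where "T k = snd (st N x z k)" for k
  obtain h where Hh: "H = Suc h" using H1 by (cases H) auto
  have S1: "z v + T h v = 1" if "v \<in> N" for v
  proof -
    have "\<Phi> z v = z v" using zfix that by blast
    then show ?thesis by (simp add: \<Phi>_def T_def Hh)
  qed
  have Ynn: "0 \<le> Y k v" if "v \<in> N" for k v
  proof (cases k)
    case 0 then show ?thesis using zc that by (simp add: Y_def)
  next
    case (Suc k') then show ?thesis using st_Y_nn[OF finN] by (simp add: Y_def)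
  qed
  have S3: "(\<Sum>k<H. Y k v) = 1" if "v \<in> N" for v
    using st_sum[where m=h and N=N and x=x and z=z and v=v] S1[OF that] by (simp add: Y_def T_def Hh)
  have S4: "(\<Sum>k<h. rq N x (Y k) v) \<le> 1 - x r v" if v: "v \<in> N" for v
  proof -
    have "(\<Sum>k<h. rq N x (Y k) v) \<le> (\<Sum>k<h. \<Sum>u\<in>N - {v}. max 0 (Y k u - (1 - x u v)))"
      by (rule sum_mono) (rule rq_le_sum[OF finN])
    also have "\<dots> = (\<Sum>u\<in>N - {v}. \<Sum>k<h. max 0 (Y k u - (1 - x u v)))"
      by (rule sum.swap)
    also have "\<dots> \<le> (\<Sum>u\<in>N - {v}. x u v)"
    proof (rule sum_mono)
      fix u assume u: "u \<in> N - {v}"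
      have "(\<Sum>k<h. Y k u) \<le> (\<Sum>k<H. Y k u)"
        by (rule sum_mono2) (use Ynn u Hh in auto)
      then have s1: "(\<Sum>k<h. Y k u) \<le> 1" using S3[of u] u by simp
      have xb: "0 \<le> 1 - x u v" "1 - x u v \<le> 1" using Xb[of u v] u v NV by auto
      show "(\<Sum>k<h. max 0 (Y k u - (1 - x u v))) \<le> x u v"
        using sum_pos_part_le[of "{..<h}" "\<lambda>k. Y k u" "1 - x u v"] s1 xb Ynn u by auto
    qed
    also have "\<dots> \<le> 1 - x r v" using X1'[OF v] by simp
    finally show ?thesis .
  qed
  have rqnn: "0 \<le> rq N x Y' v" for Y' v by (rule rq_nn[OF finN])
  have S5: "T m v = (\<Sum>k<m. rq N x (Y k) v)" if v: "v \<in> N" and m: "m \<le> h" for m v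
    using m
  proof (induction m)
    case 0 then show ?case by (simp add: T_def)
  next
    case (Suc m)
    have "(\<Sum>k<Suc m. rq N x (Y k) v) \<le> (\<Sum>k<h. rq N x (Y k) v)"
      by (rule sum_mono2) (use Suc.prems rqnn in auto)
    also have "\<dots> \<le> 1 - x r v" by (rule S4[OF v])
    also have "\<dots> \<le> 1" using Xb[of r v] rV NV v by auto
    finally have le1: "(\<Sum>k<Suc m. rq N x (Y k) v) \<le> 1" .
    have "T (Suc m) v = min 1 (T m v + rq N x (Y m) v)" by (simp add: T_def Y_def)
    also have "\<dots> = min 1 (\<Sum>k<Suc m. rq N x (Y k) v)" using Suc by simp
    also have "\<dots> = (\<Sum>k<Suc m. rq N x (Y k) v)" using le1 by simp
    finally show ?case .
  qed
  have Yrq: "Y (Suc m) v = rq N x (Y m) v" if v: "v \<in> N" and m: "Suc m \<le> h" for m v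
  proof -
    have "Y (Suc m) v = T (Suc m) v - T m v" by (simp add: Y_def T_def)
    then show ?thesis using S5[OF v m] S5[OF v, of m] m by simp
  qed
  have zge: "x r v \<le> z v" if v: "v \<in> N" for v
    using S1[OF v] S5[OF v, of h] S4[OF v] by simp
  have inv: "Y k v \<le> 1 - l v (k + 1)" if "v \<in> N" "k \<le> h" for k v
    using that
  proof (induction k arbitrary: v)
    case 0 then show ?case using zc Pl1 by (simp add: Y_def)
  next
    case (Suc k)
    have "Y (Suc k) v \<le> rq N x (Y k) v" using st_Y_le by (simp add: Y_def)
    also have "\<dots> \<le> 1 - l v (Suc k + 1)"
    proof (rule rq_le[OF finN])
      show "0 \<le> 1 - l v (Suc k + 1)" using Pb[of v "Suc k + 1"] Suc.prems NV Hh by auto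
      fix u assume u: "u \<in> N" "u \<noteq> v"
      have "Y k u \<le> 1 - l u (k + 1)" using Suc.IH[of u] u Suc.prems by auto
      moreover have "1 - l u (k + 1) - (1 - x u v) \<le> 1 - l v (k + 2)"
        using key[of u v k] u Suc.prems Hh by auto
      ultimately show "Y k u - (1 - x u v) \<le> 1 - l v (Suc k + 1)" by simp
    qed
    finally show ?case .
  qed
  define y where "y v i = (if v = r then (if i = 0 then 1 else 0) else if i = 0 then 0 else Y (i - 1) v)" for v i
  have yN: "y v i = Y (i - 1) v" if "v \<in> N" "i \<noteq> 0" for v i
    using that by (simp add: y_def N_def)
  have ybnd: "0 \<le> y v i \<and> y v i \<le> 1" if v: "v \<in> V" and i: "i \<le> H" for v i
  proof (cases "v = r \<or> i = 0")
    case True then show ?thesis by (auto simp: y_def)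
  next
    case False
    then have vN: "v \<in> N" using v by (simp add: N_def)
    have "Y (i - 1) v \<le> 1 - l v (i - 1 + 1)" using inv[OF vN, of "i - 1"] i Hh by simp
    moreover have "0 \<le> l v (i - 1 + 1)" using Pb[of v "i - 1 + 1"] v i False by simp
    ultimately show ?thesis using yN[OF vN] Ynn[OF vN] False by simp
  qed
  have ysum: "(\<Sum>i = 1..H. y v i) = 1" if v: "v \<in> N" for v
  proof -
    have "(\<Sum>i = 1..H. y v i) = (\<Sum>k<H. y v (Suc k))" by (rule sum_1_shift)
    also have "\<dots> = (\<Sum>k<H. Y k v)" using yN[OF v] by simp
    finally show ?thesis using S3[OF v] by simp
  qed
  have cons1: "y u i - y v (i + 1) + x u v \<le> 1"
    if u: "u \<in> V" and v: "v \<in> V" and uv: "u \<noteq> v" and i: "i < H" for u v i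
  proof (cases "u = r")
    case True
    then have vN: "v \<in> N" using v uv by (simp add: N_def)
    show ?thesis
    proof (cases "i = 0")
      case True
      then show ?thesis using \<open>u = r\<close> zge[OF vN] yN[OF vN, of 1] by (simp add: y_def Y_def)
    next
      case False
      then show ?thesis using \<open>u = r\<close> ybnd[of v "i + 1"] v i Xb[of u v] u uv by (simp add: y_def)
    qed
  next
    case False
    then have uN: "u \<in> N" using u by (simp add: N_def)
    show ?thesis
    proof (cases "v = r")
      case True
      then show ?thesis using xr0[OF uN] ybnd[of u i] u i by (simp add: y_def)
    next
      case False
      then have vN: "v \<in> N" using v by (simp add: N_def)
      show ?thesis
      proof (cases "i = 0")
        case True
        then show ?thesis using ybnd[of v 1] v H1 Xb[of u v] u uv \<open>u \<noteq> r\<close> by (simp add: y_def)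
      next
        case False
        then obtain m where im: "i = Suc m" by (cases i) auto
        have "y v (i + 1) = rq N x (Y m) v"
          using yN[OF vN, of "i + 1"] Yrq[OF vN, of m] im i Hh by simp
        moreover have "Y m u - (1 - x u v) \<le> rq N x (Y m) v"
          by (rule rq_ge[OF finN uN uv])
        ultimately show ?thesis using yN[OF uN, of i] im by simp
      qed
    qed
  qed
  have cons2: "y u H + x u v \<le> 1" if u: "u \<in> V" and v: "v \<in> V" and uv: "u \<noteq> v" for u v
  proof (cases "u = r")
    case True
    then show ?thesis using H1 Xb[of u v] u v uv by (simp add: y_def)
  next
    case False
    then have uN: "u \<in> N" using u by (simp add: N_def)
    show ?thesis
    proof (cases "v = r")
      case True
      then show ?thesis using xr0[OF uN] ybnd[of u H] u by simp
    next
      case False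
      then have vN: "v \<in> N" using v by (simp add: N_def)
      have "y u H = Y h u" using yN[OF uN, of H] Hh by simp
      also have "\<dots> \<le> 1 - l u (h + 1)" by (rule inv[OF uN]) simp
      finally show ?thesis using keyH[OF uN vN uv] Hh by simp
    qed
  qed
  have "(x, y) \<in> poly_A V r H"
    unfolding poly_A_def
  proof (intro CollectI case_prodI conjI ballI allI impI)
    show "x_cons V r x" by (rule xc)
    show "y r 0 = 1" by (simp add: y_def)
    show "y r i = 0" if "i \<in> {1..H}" for i using that by (simp add: y_def)
    show "y v 0 = 0" if "v \<in> V - {r}" for v using that by (simp add: y_def)
    show "(\<Sum>i = 1..H. y v i) = 1" if "v \<in> V - {r}" for v using that ysum by (simp add: N_def)
    show "y u i - y v (i + 1) + x u v \<le> 1" if "u \<in> V" "v \<in> V" "u \<noteq> v" "i < H" for u v i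
      using cons1 that by blast
    show "y u H + x u v \<le> 1" if "u \<in> V" "v \<in> V" "u \<noteq> v" for u v
      using cons2 that by blast
    show "0 \<le> y v i" if "v \<in> V" "i \<le> H" for v i using ybnd that by blast
    show "y v i \<le> 1" if "v \<in> V" "i \<le> H" for v i using ybnd that by blast
  qed
  then show ?thesis by blast
qed

theorem corollary1:
  fixes V :: "'a set" and r :: 'a and H :: nat
    and c :: "'a \<Rightarrow> 'a \<Rightarrow> real"
    and C :: "(('a \<Rightarrow> 'a \<Rightarrow> real) \<times> real) set"
  assumes "finite V" and "r \<in> V" and "H \<ge> 1" and "finite C"
  shows "lp_min_P V r H c C \<ge> lp_min_A V r H c C \<and>
         lp_max_P V r H c C \<le> lp_max_A V r H c C"
proof -
  have ex: "\<exists>q\<in>{p \<in> poly_A V r H. sat_C V C (fst p)}. fst q = fst p"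
    if pP: "p \<in> {p \<in> poly_P V r H. sat_C V C (fst p)}" for p
  proof -
    obtain x l g where p: "p = (x, l, g)" by (cases p) auto
    have "(x, l, g) \<in> poly_P V r H" using pP p by simp
    then obtain y where "(x, y) \<in> poly_A V r H" using P_to_A[OF assms(1,2,3)] by blast
    then show ?thesis using pP p by force
  qed
  have 1: "lp_min_A V r H c C \<le> lp_min_P V r H c C"
    unfolding lp_min_A_def lp_min_P_def
  proof (rule INF_greatest)
    fix p assume "p \<in> {p \<in> poly_P V r H. sat_C V C (fst p)}"
    then obtain q where q: "q \<in> {p \<in> poly_A V r H. sat_C V C (fst p)}" "fst q = fst p" using ex by blast
    then show "(INF p\<in>{p \<in> poly_A V r H. sat_C V C (fst p)}. ereal (lin_x V c (fst p))) \<le> ereal (lin_x V c (fst p))"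
    proof -
      have "(INF p\<in>{p \<in> poly_A V r H. sat_C V C (fst p)}. ereal (lin_x V c (fst p))) \<le> ereal (lin_x V c (fst q))"
        by (rule INF_lower[OF q(1)])
      then show ?thesis using q(2) by simp
    qed
  qed
  have 2: "lp_max_P V r H c C \<le> lp_max_A V r H c C"
    unfolding lp_max_A_def lp_max_P_def
  proof (rule SUP_least)
    fix p assume "p \<in> {p \<in> poly_P V r H. sat_C V C (fst p)}"
    then obtain q where q: "q \<in> {p \<in> poly_A V r H. sat_C V C (fst p)}" "fst q = fst p" using ex by blast
    then show "ereal (lin_x V c (fst p)) \<le> (SUP p\<in>{p \<in> poly_A V r H. sat_C V C (fst p)}. ereal (lin_x V c (fst p)))"
    proof -
      have "ereal (lin_x V c (fst q)) \<le> (SUP p\<in>{p \<in> poly_A V r H. sat_C V C (fst p)}. ereal (lin_x V c (fst p)))"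
        by (rule SUP_upper[OF q(1)])
      then show ?thesis using q(2) by simp
    qed
  qed
  show ?thesis using 1 2 by simp
qed

end
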